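(* Let $G$ be a graph with length-function $\ell$, let $k$ be a natural number and let $H\subseteq G$. If $H$ is not $k$-geodesic in $G$, then $G$ contains a subgraph $T$ which is a tree with at most $k$ leaves and which, with respect to the restriction of $\ell$ to $T\cup H$, is a shortcut tree for $H$.
   Context: All graphs are finite; parallel edges are allowed, loops are not. A length-function on a graph $G$ is a map $\ell:E(G)\to\mathbb{R}^+$ (strictly positive reals); for a subgraph $H$ put $\ell(H)=\sum_{e\in E(H)}\ell(e)$, and subgraphs carry the restricted length-function. For $A\subseteq V(G)$, the Steiner distance $\mathrm{sd}_G(A)$ is the minimum of $\ell(S)$ over all connected subgraphs $S\subseteq G$ with $A\subseteq V(S)$ ($\infty$ if none exists). A subgraph $H\subseteq G$ is $k$-geodesic in $G$ if $\mathrm{sd}_H(A)=\mathrm{sd}_G(A)$ for every $A\subseteq V(H)$ with $|A|\le k$. $L(T)$ denotes the set of leaves of a tree $T$. Shortcut tree: let $H$ be a graph, $T$ a tree, both subgraphs of the graph $T\cup H$, and $\ell$ a length-function on $T\cup H$. Then $T$ is a shortcut tree for $H$ if (SCT1) $V(T)\cap V(H)=L(T)$; (SCT2) $E(T)\cap E(H)=\emptyset$; (SCT3) $\ell(T)<\mathrm{sd}_H(L(T))$; (SCT4) for every proper subset $B\subsetneq L(T)$ we have $\mathrm{sd}_H(B)\le \mathrm{sd}_T(B)$. *)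

theory Defs
  imports Complex_Main "HOL-Library.Extended_Real"
begin

text \<open>A graph is a pair
(V, E) of a vertex set and an edge set; all graphs considered are subgraphs of
one ambient graph and share the incidence map, so parallel edges are distinct
edge objects with equal incidence sets.\<close>

definition graph :: "('e \<Rightarrow> 'v set) \<Rightarrow> 'v set \<Rightarrow> 'e set \<Rightarrow> bool" where
  "graph inc V E \<longleftrightarrow> finite V \<and> finite E \<and> (\<forall>e\<in>E. inc e \<subseteq> V \<and> card (inc e) = 2)"

definition subgraph :: "('e \<Rightarrow> 'v set) \<Rightarrow> 'v set \<Rightarrow> 'e set \<Rightarrow> 'v set \<Rightarrow> 'e set \<Rightarrow> bool" where
  "subgraph inc V' E' V E \<longleftrightarrow> V' \<subseteq> V \<and> E' \<subseteq> E \<and> (\<forall>e\<in>E'. inc e \<subseteq> V')"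

definition adj :: "('e \<Rightarrow> 'v set) \<Rightarrow> 'e set \<Rightarrow> 'v \<Rightarrow> 'v \<Rightarrow> bool" where
  "adj inc E x y \<longleftrightarrow> (\<exists>e\<in>E. inc e = {x, y})"

text \<open>Connected graphs are nonempty (Diestel's convention).\<close>
definition connected_graph :: "('e \<Rightarrow> 'v set) \<Rightarrow> 'v set \<Rightarrow> 'e set \<Rightarrow> bool" where
  "connected_graph inc V E \<longleftrightarrow> V \<noteq> {} \<and> (\<forall>x\<in>V. \<forall>y\<in>V. (adj inc E)\<^sup>*\<^sup>* x y)"

text \<open>A tree is a minimally connected graph: connected, and deleting any edge
disconnects it (equivalently, connected and without cycles).\<close>
definition is_tree :: "('e \<Rightarrow> 'v set) \<Rightarrow> 'v set \<Rightarrow> 'e set \<Rightarrow> bool" where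
  "is_tree inc V E \<longleftrightarrow> connected_graph inc V E \<and> (\<forall>e\<in>E. \<not> connected_graph inc V (E - {e}))"

definition leaves :: "('e \<Rightarrow> 'v set) \<Rightarrow> 'v set \<Rightarrow> 'e set \<Rightarrow> 'v set" where
  "leaves inc V E = {v\<in>V. card {e\<in>E. v \<in> inc e} = 1}"

definition glen :: "('e \<Rightarrow> real) \<Rightarrow> 'e set \<Rightarrow> real" where
  "glen l E = (\<Sum>e\<in>E. l e)"

text \<open>Steiner distance; the infimum over the empty set is \<infinity>.\<close>
definition sd :: "('e \<Rightarrow> 'v set) \<Rightarrow> ('e \<Rightarrow> real) \<Rightarrow> 'v set \<Rightarrow> 'e set \<Rightarrow> 'v set \<Rightarrow> ereal" where
  "sd inc l V E A =
     (INF S \<in> {(V', E'). subgraph inc V' E' V E \<and> connected_graph inc V' E' \<and> A \<subseteq> V'}.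
        ereal (glen l (snd S)))"

definition k_geodesic ::
  "('e \<Rightarrow> 'v set) \<Rightarrow> ('e \<Rightarrow> real) \<Rightarrow> nat \<Rightarrow> 'v set \<Rightarrow> 'e set \<Rightarrow> 'v set \<Rightarrow> 'e set \<Rightarrow> bool" where
  "k_geodesic inc l k VH EH VG EG \<longleftrightarrow>
     (\<forall>A. A \<subseteq> VH \<and> card A \<le> k \<longrightarrow> sd inc l VH EH A = sd inc l VG EG A)"

definition shortcut_tree ::
  "('e \<Rightarrow> 'v set) \<Rightarrow> ('e \<Rightarrow> real) \<Rightarrow> 'v set \<Rightarrow> 'e set \<Rightarrow> 'v set \<Rightarrow> 'e set \<Rightarrow> bool" where
  "shortcut_tree inc l VT ET VH EH \<longleftrightarrow>
     is_tree inc VT ET \<and>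
     VT \<inter> VH = leaves inc VT ET \<and>
     ET \<inter> EH = {} \<and>
     ereal (glen l ET) < sd inc l VH EH (leaves inc VT ET) \<and>
     (\<forall>B. B \<subset> leaves inc VT ET \<longrightarrow> sd inc l VH EH B \<le> sd inc l VT ET B)"

end

theory Submission
  imports Defs
begin


lemma adj_sym: "adj inc E x y \<Longrightarrow> adj inc E y x"
  by (auto simp: adj_def insert_commute)

lemma reach_sym: "(adj inc E)\<^sup>*\<^sup>* x y \<Longrightarrow> (adj inc E)\<^sup>*\<^sup>* y x"
  by (induction rule: rtranclp_induct) (auto intro: converse_rtranclp_into_rtranclp adj_sym)

lemma reach_mono: "E \<subseteq> E' \<Longrightarrow> (adj inc E)\<^sup>*\<^sup>* x y \<Longrightarrow> (adj inc E')\<^sup>*\<^sup>* x y"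
proof -
  assume "E \<subseteq> E'"
  then have "adj inc E \<le> adj inc E'" by (auto simp: adj_def) blast
  then show "(adj inc E)\<^sup>*\<^sup>* x y \<Longrightarrow> (adj inc E')\<^sup>*\<^sup>* x y" using rtranclp_mono by blast
qed

lemma reach_in: "(adj inc E)\<^sup>*\<^sup>* x y \<Longrightarrow> \<forall>f\<in>E. inc f \<subseteq> V \<Longrightarrow> x \<in> V \<Longrightarrow> y \<in> V"
  by (induction rule: rtranclp_induct) (auto simp: adj_def)

lemma no_edge_reach: assumes "\<forall>f\<in>E. x \<notin> inc f" "(adj inc E)\<^sup>*\<^sup>* x y" shows "y = x"
  using assms(2) by (induction rule: rtranclp_induct) (use assms(1) in \<open>auto simp: adj_def\<close>)

lemma reach_restrict:
  assumes "(adj inc E)\<^sup>*\<^sup>* x y"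
  shows "(adj inc {f\<in>E. inc f \<subseteq> {z. (adj inc E)\<^sup>*\<^sup>* x z}})\<^sup>*\<^sup>* x y"
  using assms
proof (induction rule: rtranclp_induct)
  case base then show ?case by simp
next
  case (step y z)
  from step.hyps(2) obtain f where f: "f \<in> E" "inc f = {y, z}" by (auto simp: adj_def)
  have "(adj inc E)\<^sup>*\<^sup>* x z" using step.hyps by auto
  with f step.hyps(1) have "adj inc {f\<in>E. inc f \<subseteq> {z. (adj inc E)\<^sup>*\<^sup>* x z}} y z"
    by (auto simp: adj_def intro!: bexI[of _ f])
  with step.IH show ?case by (rule rtranclp.rtrancl_into_rtrancl)
qed

lemma comp_connected:
  "connected_graph inc {y. (adj inc E)\<^sup>*\<^sup>* x y} {f\<in>E. inc f \<subseteq> {y. (adj inc E)\<^sup>*\<^sup>* x y}}"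
  unfolding connected_graph_def
proof (intro conjI ballI)
  show "{y. (adj inc E)\<^sup>*\<^sup>* x y} \<noteq> {}" by auto
next
  fix a b assume "a \<in> {y. (adj inc E)\<^sup>*\<^sup>* x y}" "b \<in> {y. (adj inc E)\<^sup>*\<^sup>* x y}"
  then have "(adj inc {f\<in>E. inc f \<subseteq> {z. (adj inc E)\<^sup>*\<^sup>* x z}})\<^sup>*\<^sup>* x a"
    "(adj inc {f\<in>E. inc f \<subseteq> {z. (adj inc E)\<^sup>*\<^sup>* x z}})\<^sup>*\<^sup>* x b"
    using reach_restrict by auto
  then show "(adj inc {f\<in>E. inc f \<subseteq> {y. (adj inc E)\<^sup>*\<^sup>* x y}})\<^sup>*\<^sup>* a b"
    by (meson reach_sym rtranclp_trans)
qed

lemma connected_union: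
  assumes "connected_graph inc V1 E1" "connected_graph inc V2 E2" "v \<in> V1" "v \<in> V2"
  shows "connected_graph inc (V1 \<union> V2) (E1 \<union> E2)"
  unfolding connected_graph_def
proof (intro conjI ballI)
  show "V1 \<union> V2 \<noteq> {}" using assms by auto
next
  fix x y assume xy: "x \<in> V1 \<union> V2" "y \<in> V1 \<union> V2"
  have r: "(adj inc (E1 \<union> E2))\<^sup>*\<^sup>* z v" if "z \<in> V1 \<union> V2" for z
  proof (cases "z \<in> V1")
    case True
    then have "(adj inc E1)\<^sup>*\<^sup>* z v" using assms unfolding connected_graph_def by auto
    then show ?thesis by (rule reach_mono[rotated]) auto
  next
    case False
    then have "(adj inc E2)\<^sup>*\<^sup>* z v" using that assms unfolding connected_graph_def by auto
    then show ?thesis by (rule reach_mono[rotated]) auto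
  qed
  show "(adj inc (E1 \<union> E2))\<^sup>*\<^sup>* x y"
    using r[OF xy(1)] reach_sym[OF r[OF xy(2)]] by (meson rtranclp_trans)
qed

lemma split_edge:
  assumes edges: "\<forall>f\<in>E. inc f \<subseteq> V \<and> card (inc f) = 2"
    and conn: "connected_graph inc V E" and eE: "e \<in> E"
    and nconn: "\<not> connected_graph inc V (E - {e})" and inc_e: "inc e = {u,w}"
  shows "V = {y. (adj inc (E-{e}))\<^sup>*\<^sup>* u y} \<union> {y. (adj inc (E-{e}))\<^sup>*\<^sup>* w y}"
    "{y. (adj inc (E-{e}))\<^sup>*\<^sup>* u y} \<inter> {y. (adj inc (E-{e}))\<^sup>*\<^sup>* w y} = {}"
    "\<forall>f\<in>E-{e}. inc f \<subseteq> {y. (adj inc (E-{e}))\<^sup>*\<^sup>* u y} \<or> inc f \<subseteq> {y. (adj inc (E-{e}))\<^sup>*\<^sup>* w y}"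
proof -
  let ?R = "(adj inc (E-{e}))\<^sup>*\<^sup>*"
  have uV: "u \<in> V" and wV: "w \<in> V" using edges eE inc_e by auto
  have sub: "\<forall>f\<in>E-{e}. inc f \<subseteq> V" using edges by auto
  have cov: "?R u y \<or> ?R w y" if "y \<in> V" for y
  proof -
    have "(adj inc E)\<^sup>*\<^sup>* u y" using conn uV that unfolding connected_graph_def by auto
    then show ?thesis
    proof (induction rule: rtranclp_induct)
      case base then show ?case by simp
    next
      case (step y z)
      from step.hyps(2) obtain f where f: "f \<in> E" "inc f = {y, z}" by (auto simp: adj_def)
      show ?case
      proof (cases "f = e")
        case True
        then have "z = u \<or> z = w" using f inc_e by (metis doubleton_eq_iff insert_iff)
        then show ?thesis by auto
      next
        case False
        then have "adj inc (E-{e}) y z" using f by (auto simp: adj_def)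
        then show ?thesis using step.IH by (meson rtranclp.rtrancl_into_rtrancl)
      qed
    qed
  qed
  show V: "V = {y. ?R u y} \<union> {y. ?R w y}"
    using cov reach_in[OF _ sub uV] reach_in[OF _ sub wV] by blast
  show disj: "{y. ?R u y} \<inter> {y. ?R w y} = {}"
  proof (rule ccontr)
    assume "{y. ?R u y} \<inter> {y. ?R w y} \<noteq> {}"
    then obtain z where "?R u z" "?R w z" by auto
    then have uw: "?R u w" by (meson reach_sym rtranclp_trans)
    have "?R u y" if "y \<in> V" for y using cov[OF that] uw by (meson rtranclp_trans)
    then have "connected_graph inc V (E - {e})"
      using conn unfolding connected_graph_def by (meson reach_sym rtranclp_trans)
    with nconn show False by simp
  qed
  show "\<forall>f\<in>E-{e}. inc f \<subseteq> {y. ?R u y} \<or> inc f \<subseteq> {y. ?R w y}"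
  proof
    fix f assume f: "f \<in> E - {e}"
    then obtain a b where ab: "inc f = {a,b}" using edges by (metis DiffD1 card_2_iff)
    then have "a \<in> V" using edges f by auto
    have "adj inc (E-{e}) a b" using f ab by (auto simp: adj_def)
    then have "?R x a \<Longrightarrow> ?R x b" for x by (meson rtranclp.rtrancl_into_rtrancl)
    then show "inc f \<subseteq> {y. ?R u y} \<or> inc f \<subseteq> {y. ?R w y}"
      using cov[OF \<open>a \<in> V\<close>] ab by auto
  qed
qed


lemma sd_le:
  assumes "subgraph inc V' E' V E" "connected_graph inc V' E'" "A \<subseteq> V'"
  shows "sd inc l V E A \<le> ereal (glen l E')"
  unfolding sd_def by (rule INF_lower2[of "(V',E')"]) (use assms in auto)

lemma sd_mono_A: "A \<subseteq> A' \<Longrightarrow> sd inc l V E A \<le> sd inc l V E A'"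
  unfolding sd_def by (rule INF_superset_mono) auto

lemma sd_mono_graph: "subgraph inc VH EH VG EG \<Longrightarrow> sd inc l VG EG A \<le> sd inc l VH EH A"
  unfolding sd_def by (rule INF_superset_mono) (auto simp: subgraph_def)

lemma sd_attained:
  assumes "finite V" "finite E" "subgraph inc V' E' V E" "connected_graph inc V' E'" "A \<subseteq> V'"
  shows "\<exists>V'' E''. subgraph inc V'' E'' V E \<and> connected_graph inc V'' E'' \<and> A \<subseteq> V''
     \<and> sd inc l V E A = ereal (glen l E'')"
proof -
  let ?F = "{(V', E'). subgraph inc V' E' V E \<and> connected_graph inc V' E' \<and> A \<subseteq> V'}"
  have "?F \<subseteq> Pow V \<times> Pow E" by (auto simp: subgraph_def)
  moreover have "finite (Pow V \<times> Pow E)" using assms(1,2) by simp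
  ultimately have fin: "finite ?F" by (rule finite_subset)
  have ne: "?F \<noteq> {}" using assms by auto
  let ?g = "\<lambda>S. ereal (glen l (snd S))"
  have "sd inc l V E A = Inf (?g ` ?F)" unfolding sd_def by simp
  also have "\<dots> = Min (?g ` ?F)" using fin ne by (simp add: Min_Inf)
  moreover have "Min (?g ` ?F) \<in> ?g ` ?F" using fin ne by (intro Min_in) auto
  ultimately have "sd inc l V E A \<in> ?g ` ?F" by simp
  then show ?thesis by force
qed

lemma sd_lt_top_feasible:
  assumes "sd inc l V E A \<le> ereal a"
  shows "\<exists>V' E'. subgraph inc V' E' V E \<and> connected_graph inc V' E' \<and> A \<subseteq> V'"
proof (rule ccontr)
  assume "\<not> ?thesis"
  then have "{(V', E'). subgraph inc V' E' V E \<and> connected_graph inc V' E' \<and> A \<subseteq> V'} = {}" (is "?F = {}") by auto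
  have "sd inc l V E A = \<infinity>" unfolding sd_def \<open>?F = {}\<close> by (simp add: top_ereal_def)
  with assms show False by simp
qed

lemma glen_mono: "finite E2 \<Longrightarrow> E1 \<subseteq> E2 \<Longrightarrow> \<forall>f\<in>E2. l f \<ge> 0 \<Longrightarrow> glen l E1 \<le> glen l E2"
  unfolding glen_def by (rule sum_mono2) auto

lemma glen_union: "finite E1 \<Longrightarrow> finite E2 \<Longrightarrow> \<forall>f\<in>E1. l f \<ge> 0 \<Longrightarrow>
   glen l (E1 \<union> E2) \<le> glen l E1 + glen l E2"
  unfolding glen_def
proof -
  assume a: "finite E1" "finite E2" "\<forall>f\<in>E1. l f \<ge> 0"
  have "sum l (E1 \<union> E2) = sum l E1 + sum l E2 - sum l (E1 \<inter> E2)"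
    using a by (simp add: sum_Un)
  moreover have "sum l (E1 \<inter> E2) \<ge> 0" using a by (intro sum_nonneg) auto
  ultimately show "sum l (E1 \<union> E2) \<le> sum l E1 + sum l E2" by simp
qed

lemma sd_union:
  assumes fin: "finite VH" "finite EH" and pos: "\<forall>f\<in>EH. l f \<ge> 0"
    and s1: "sd inc l VH EH A1 \<le> ereal a" and s2: "sd inc l VH EH A2 \<le> ereal b"
    and v: "v \<in> A1" "v \<in> A2"
  shows "sd inc l VH EH (A1 \<union> A2) \<le> ereal (a + b)"
proof -
  obtain V1 E1 where f1: "subgraph inc V1 E1 VH EH" "connected_graph inc V1 E1" "A1 \<subseteq> V1"
    using sd_lt_top_feasible[OF s1] by blast
  obtain W1 F1 where g1: "subgraph inc W1 F1 VH EH" "connected_graph inc W1 F1" "A1 \<subseteq> W1"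
    "sd inc l VH EH A1 = ereal (glen l F1)"
    using sd_attained[OF fin f1] by blast
  obtain V2 E2 where f2: "subgraph inc V2 E2 VH EH" "connected_graph inc V2 E2" "A2 \<subseteq> V2"
    using sd_lt_top_feasible[OF s2] by blast
  obtain W2 F2 where g2: "subgraph inc W2 F2 VH EH" "connected_graph inc W2 F2" "A2 \<subseteq> W2"
    "sd inc l VH EH A2 = ereal (glen l F2)"
    using sd_attained[OF fin f2] by blast
  have sub: "subgraph inc (W1 \<union> W2) (F1 \<union> F2) VH EH" using g1 g2 by (auto simp: subgraph_def)
  have con: "connected_graph inc (W1 \<union> W2) (F1 \<union> F2)"
    using connected_union[OF g1(2) g2(2)] v g1(3) g2(3) by auto
  have finF: "finite F1" "finite F2" using g1 g2 fin by (auto simp: subgraph_def intro: finite_subset)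
  have "sd inc l VH EH (A1 \<union> A2) \<le> ereal (glen l (F1 \<union> F2))"
    by (rule sd_le[OF sub con]) (use g1(3) g2(3) in auto)
  also have "\<dots> \<le> ereal (glen l F1 + glen l F2)"
    using glen_union[OF finF, of l] pos g1(1) by (auto simp: subgraph_def)
  also have "\<dots> \<le> ereal (a + b)" using s1 s2 g1(4) g2(4) by simp
  finally show ?thesis .
qed

lemma leaf_remove:
  assumes edges: "\<forall>f\<in>E. inc f \<subseteq> V \<and> card (inc f) = 2" and fin: "finite E"
    and tree: "is_tree inc V E" and lv: "v \<in> leaves inc V E"
  shows "\<exists>e\<in>E. v \<in> inc e \<and> (\<forall>f\<in>E. v \<in> inc f \<longrightarrow> f = e) \<and>
     connected_graph inc (V - {v}) (E - {e}) \<and> (\<forall>f\<in>E-{e}. inc f \<subseteq> V - {v})"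
proof -
  have "card {f\<in>E. v \<in> inc f} = 1" using lv by (simp add: leaves_def)
  then obtain e where D: "{f\<in>E. v \<in> inc f} = {e}" by (rule card_1_singletonE)
  then have eE: "e \<in> E" and ve: "v \<in> inc e" and uniq: "\<forall>f\<in>E. v \<in> inc f \<longrightarrow> f = e" by auto
  obtain x y where xy: "inc e = {x,y}" "x \<noteq> y" using edges eE by (metis card_2_iff)
  obtain w where incw: "inc e = {v,w}" "v \<noteq> w" using xy ve by auto
  have conn: "connected_graph inc V E" and nconn: "\<not> connected_graph inc V (E - {e})"
    using tree eE unfolding is_tree_def by auto
  note S = split_edge[OF edges conn eE nconn incw(1)]
  let ?R = "(adj inc (E-{e}))\<^sup>*\<^sup>*"
  have Cv: "{y. ?R v y} = {v}" using no_edge_reach[of "E-{e}" v inc] uniq by auto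
  have Cw: "{y. ?R w y} = V - {v}" using S(1,2) Cv by auto
  have edg: "\<forall>f\<in>E-{e}. inc f \<subseteq> V - {v}"
  proof
    fix f assume f: "f \<in> E - {e}"
    have "\<not> inc f \<subseteq> {v}"
    proof
      assume "inc f \<subseteq> {v}"
      then have "card (inc f) \<le> card {v}" by (intro card_mono) auto
      with edges f show False by auto
    qed
    then show "inc f \<subseteq> V - {v}" using S(3) f Cv Cw by auto
  qed
  have "connected_graph inc {y. ?R w y} {f\<in>E-{e}. inc f \<subseteq> {y. ?R w y}}" by (rule comp_connected)
  also have "{f\<in>E-{e}. inc f \<subseteq> {y. ?R w y}} = E - {e}" using edg Cw by auto
  finally have "connected_graph inc (V - {v}) (E - {e})" using Cw by simp
  then show ?thesis using eE ve uniq edg by blast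
qed



theorem lemma3p1:
  fixes inc :: "'e \<Rightarrow> 'v set" and l :: "'e \<Rightarrow> real" and k :: nat
    and VG VH :: "'v set" and EG EH :: "'e set"
  assumes "graph inc VG EG"
    and "\<forall>e\<in>EG. l e > 0"
    and "subgraph inc VH EH VG EG"
    and "\<not> k_geodesic inc l k VH EH VG EG"
  shows "\<exists>VT ET. subgraph inc VT ET VG EG \<and> is_tree inc VT ET \<and>
           card (leaves inc VT ET) \<le> k \<and> shortcut_tree inc l VT ET VH EH"
proof -
  note G = assms(1)[unfolded graph_def] and H = assms(3)[unfolded subgraph_def]
  have finH: "finite VH" "finite EH" using G H by (auto intro: finite_subset)
  have posH: "\<forall>f\<in>EH. l f \<ge> 0" using H assms(2) by (auto intro: less_imp_le)
  obtain A0 where A0: "A0 \<subseteq> VH" "card A0 \<le> k" "sd inc l VH EH A0 \<noteq> sd inc l VG EG A0"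
    using assms(4) unfolding k_geodesic_def by auto
  have "sd inc l VG EG A0 \<le> sd inc l VH EH A0" using sd_mono_graph[OF assms(3)] .
  with A0 have "sd inc l VG EG A0 < sd inc l VH EH A0" by simp
  then obtain V0 E0 where S0: "subgraph inc V0 E0 VG EG" "connected_graph inc V0 E0" "A0 \<subseteq> V0"
    "ereal (glen l E0) < sd inc l VH EH A0"
    unfolding sd_def[of inc l VG EG] INF_less_iff by auto
  define P where "P = (\<lambda>(A, V', E'). A \<subseteq> VH \<and> card A \<le> k \<and> subgraph inc V' E' VG EG \<and>
      connected_graph inc V' E' \<and> A \<subseteq> V' \<and> ereal (glen l E') < sd inc l VH EH A)"
  define m :: "'v set \<times> 'v set \<times> 'e set \<Rightarrow> nat" where "m = (\<lambda>(A, V', E'). card V' + card E')"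
  have "P (A0, V0, E0)" using A0 S0 by (simp add: P_def)
  then obtain X where X: "P X" and Xmin: "\<And>Y. P Y \<Longrightarrow> m X \<le> m Y"
    using ex_has_least_nat[of P _ m] by blast
  obtain A VT ET where XA: "X = (A, VT, ET)" by (cases X) auto
  have AVH: "A \<subseteq> VH" and Ak: "card A \<le> k" and subT: "subgraph inc VT ET VG EG"
    and connT: "connected_graph inc VT ET" and AVT: "A \<subseteq> VT"
    and lenlt: "ereal (glen l ET) < sd inc l VH EH A"
    using X by (auto simp: P_def XA)
  have finT: "finite VT" "finite ET" using subT G by (auto simp: subgraph_def intro: finite_subset)
  have edgesT: "\<forall>f\<in>ET. inc f \<subseteq> VT \<and> card (inc f) = 2" using subT G by (auto simp: subgraph_def)
  have posT: "\<forall>f\<in>ET. l f > 0" using subT assms(2) by (auto simp: subgraph_def)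
  have finA: "finite A" using AVT finT by (auto intro: finite_subset)
  have minimal: "sd inc l VH EH A' \<le> ereal (glen l E')"
    if "V' \<subseteq> VT" "E' \<subseteq> ET" "V' \<noteq> VT \<or> E' \<noteq> ET" "\<forall>f\<in>E'. inc f \<subseteq> V'" "A' \<subseteq> VH"
      "card A' \<le> k" "connected_graph inc V' E'" "A' \<subseteq> V'" for A' V' E'
  proof (rule ccontr)
    assume "\<not> ?thesis"
    then have "P (A', V', E')" using that subT by (auto simp: P_def subgraph_def)
    then have "m X \<le> m (A', V', E')" by (rule Xmin)
    moreover have "card V' + card E' < card VT + card ET"
    proof -
      have "card V' \<le> card VT" "card E' \<le> card ET" using that finT by (auto intro: card_mono)
      moreover have "card V' < card VT \<or> card E' < card ET"
        using that finT by (auto intro: psubset_card_mono)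
      ultimately show ?thesis by linarith
    qed
    ultimately show False by (simp add: m_def XA)
  qed
  have glenET: "glen l E' \<le> glen l ET" if "E' \<subseteq> ET" for E'
    using glen_mono[OF finT(2) that] posT by (auto intro: less_imp_le)
  have tree: "is_tree inc VT ET"
    unfolding is_tree_def
  proof (intro conjI ballI connT notI)
    fix e assume e: "e \<in> ET" and c: "connected_graph inc VT (ET - {e})"
    have "sd inc l VH EH A \<le> ereal (glen l (ET - {e}))"
      by (rule minimal[where V'=VT]) (use e c AVH Ak AVT edgesT in auto)
    also have "\<dots> \<le> ereal (glen l ET)" using glenET by auto
    finally show False using lenlt by simp
  qed
  have leavesA: "leaves inc VT ET \<subseteq> A"
  proof
    fix v assume v: "v \<in> leaves inc VT ET"
    show "v \<in> A"
    proof (rule ccontr)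
      assume vA: "v \<notin> A"
      obtain e where e: "e \<in> ET" "connected_graph inc (VT - {v}) (ET - {e})"
        "\<forall>f\<in>ET-{e}. inc f \<subseteq> VT - {v}"
        using leaf_remove[OF edgesT finT(2) tree v] by blast
      have "sd inc l VH EH A \<le> ereal (glen l (ET - {e}))"
        by (rule minimal[where V'="VT - {v}"]) (use e vA AVH Ak AVT in auto)
      also have "\<dots> \<le> ereal (glen l ET)" using glenET by auto
      finally show False using lenlt by simp
    qed
  qed
  have split_false: False
    if "V1 \<union> V2 = VT" "E1 \<subseteq> ET" "E2 \<subseteq> ET" "E1 \<inter> E2 = {}" "E1 \<union> E2 = ET"
      "connected_graph inc V1 E1" "connected_graph inc V2 E2"
      "\<forall>f\<in>E1. inc f \<subseteq> V1" "\<forall>f\<in>E2. inc f \<subseteq> V2" "E1 \<noteq> ET" "E2 \<noteq> ET"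
      "v \<in> V1" "v \<in> V2" "v \<in> VH" for V1 V2 E1 E2 v
  proof -
    have V1T: "V1 \<subseteq> VT" and V2T: "V2 \<subseteq> VT" using that(1) by auto
    have sumE: "glen l ET = glen l E1 + glen l E2"
      unfolding glen_def using that(4,5) finT(2) by (metis finite_Un sum.union_disjoint)
    have case1: "\<not> A \<subseteq> V1"
    proof
      assume "A \<subseteq> V1"
      then have "sd inc l VH EH A \<le> ereal (glen l E1)"
        by (intro minimal[where V'=V1]) (use that V1T AVH Ak in auto)
      also have "\<dots> \<le> ereal (glen l ET)" using glenET that by auto
      finally show False using lenlt by simp
    qed
    have case2: "\<not> A \<subseteq> V2"
    proof
      assume "A \<subseteq> V2"
      then have "sd inc l VH EH A \<le> ereal (glen l E2)"
        by (intro minimal[where V'=V2]) (use that V2T AVH Ak in auto)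
      also have "\<dots> \<le> ereal (glen l ET)" using glenET that by auto
      finally show False using lenlt by simp
    qed
    have cardi: "card (insert v (A \<inter> Vi)) \<le> k" if "\<not> A \<subseteq> Vi" for Vi
    proof (cases "v \<in> A")
      case True
      then have "card (insert v (A \<inter> Vi)) \<le> card A" using finA by (intro card_mono) auto
      then show ?thesis using Ak by simp
    next
      case False
      have "card (A \<inter> Vi) < card A" using that finA by (intro psubset_card_mono) auto
      then have "card (insert v (A \<inter> Vi)) \<le> card A" using finA
        by (metis Suc_leI card_insert_le_m1 finite_Int le_trans card_insert_if less_imp_le)
      then show ?thesis using Ak by simp
    qed
    have s1: "sd inc l VH EH (insert v (A \<inter> V1)) \<le> ereal (glen l E1)"
      by (rule minimal[where V'=V1]) (use that V1T AVH cardi[OF case1] in auto)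
    have s2: "sd inc l VH EH (insert v (A \<inter> V2)) \<le> ereal (glen l E2)"
      by (rule minimal[where V'=V2]) (use that V2T AVH cardi[OF case2] in auto)
    have "sd inc l VH EH A \<le> sd inc l VH EH (insert v (A \<inter> V1) \<union> insert v (A \<inter> V2))"
      by (rule sd_mono_A) (use AVT that(1) in auto)
    also have "\<dots> \<le> ereal (glen l E1 + glen l E2)"
      by (rule sd_union[OF finH posH s1 s2]) auto
    also have "\<dots> = ereal (glen l ET)" using sumE by simp
    finally show False using lenlt by simp
  qed
  have internal: "v \<in> leaves inc VT ET" if vT: "v \<in> VT" and vH: "v \<in> VH" for v
  proof (rule ccontr)
    assume nl: "v \<notin> leaves inc VT ET"
    let ?D = "{f\<in>ET. v \<in> inc f}"
    have finD: "finite ?D" using finT by simp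
    have cD: "card ?D \<noteq> 1" using nl vT by (simp add: leaves_def)
    show False
    proof (cases "card ?D = 0")
      case True
      then have noe: "\<forall>f\<in>ET. v \<notin> inc f" using finD by auto
      have VTv: "VT = {v}"
      proof -
        have "y = v" if "y \<in> VT" for y
        proof -
          have "(adj inc ET)\<^sup>*\<^sup>* v y" using connT vT that unfolding connected_graph_def by auto
          from no_edge_reach[OF noe this] show ?thesis .
        qed
        then show ?thesis using vT by blast
      qed
      have ETe: "ET = {}"
      proof (rule ccontr)
        assume "ET \<noteq> {}"
        then obtain f where f: "f \<in> ET" by auto
        then have "inc f \<subseteq> {v}" using edgesT VTv by auto
        then have "card (inc f) \<le> card {v}" by (intro card_mono) auto
        with edgesT f show False by auto
      qed
      have "sd inc l VH EH A \<le> ereal (glen l {})"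
        by (rule sd_le[where V'="{v}"]) (use vH AVT VTv in \<open>auto simp: subgraph_def connected_graph_def\<close>)
      then show False using lenlt ETe by (simp add: glen_def)
    next
      case False
      with cD have "card ?D \<ge> 2" by linarith
      then have "\<not> card ?D \<le> Suc 0" by simp
      then obtain e e' where ee: "e \<in> ?D" "e' \<in> ?D" "e \<noteq> e'"
        unfolding card_le_Suc0_iff_eq[OF finD] by blast
      then have eE: "e \<in> ET" and ve: "v \<in> inc e" and e'E: "e' \<in> ET" and ve': "v \<in> inc e'" by auto
      obtain x y where xy: "inc e = {x,y}" "x \<noteq> y" using edgesT eE by (metis card_2_iff)
      obtain w where incw: "inc e = {v,w}" "v \<noteq> w" using xy ve by auto
      have nconn: "\<not> connected_graph inc VT (ET - {e})" using tree eE unfolding is_tree_def by auto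
      note S = split_edge[OF edgesT connT eE nconn incw(1)]
      define Cv where "Cv = {y. (adj inc (ET-{e}))\<^sup>*\<^sup>* v y}"
      define Cw where "Cw = {y. (adj inc (ET-{e}))\<^sup>*\<^sup>* w y}"
      have S1: "VT = Cv \<union> Cw" and S2: "Cv \<inter> Cw = {}"
        and S3: "\<forall>f\<in>ET-{e}. inc f \<subseteq> Cv \<or> inc f \<subseteq> Cw" using S by (auto simp: Cv_def Cw_def)
      have vCv: "v \<in> Cv" and wCw: "w \<in> Cw" by (auto simp: Cv_def Cw_def)
      define E1 where "E1 = {f\<in>ET-{e}. inc f \<subseteq> Cv}"
      define Ew where "Ew = {f\<in>ET-{e}. inc f \<subseteq> Cw}"
      have c1: "connected_graph inc Cv E1" unfolding Cv_def E1_def by (rule comp_connected)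
      have cw: "connected_graph inc Cw Ew" unfolding Cw_def Ew_def by (rule comp_connected)
      have ce: "connected_graph inc {v,w} {e}"
        unfolding connected_graph_def
      proof (intro conjI ballI)
        fix a b assume "a \<in> {v,w}" "b \<in> {v,w}"
        moreover have "adj inc {e} v w" "adj inc {e} w v" using incw by (auto simp: adj_def insert_commute)
        ultimately show "(adj inc {e})\<^sup>*\<^sup>* a b" by auto
      qed auto
      have c2: "connected_graph inc (Cw \<union> {v,w}) (Ew \<union> {e})"
        by (rule connected_union[OF cw ce wCw]) auto
      have notinc: "\<not> inc f \<subseteq> Cv \<inter> Cw" if "f \<in> ET" for f
      proof
        assume "inc f \<subseteq> Cv \<inter> Cw"
        then have "inc f = {}" using S2 by auto
        with edgesT that show False by auto
      qed
      have e'E1: "e' \<in> E1"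
      proof -
        have "e' \<in> ET - {e}" using e'E ee by auto
        moreover have "\<not> inc e' \<subseteq> Cw" using ve' vCv S2 by auto
        ultimately show ?thesis using S3 by (auto simp: E1_def)
      qed
      show False
      proof (rule split_false[of Cv "Cw \<union> {v,w}" E1 "Ew \<union> {e}" v])
        show "Cv \<union> (Cw \<union> {v, w}) = VT" using S1 vCv wCw by auto
        show "E1 \<subseteq> ET" "Ew \<union> {e} \<subseteq> ET" using eE by (auto simp: E1_def Ew_def)
        show "E1 \<inter> (Ew \<union> {e}) = {}" using notinc by (auto simp: E1_def Ew_def)
        show "E1 \<union> (Ew \<union> {e}) = ET" using S3 eE by (auto simp: E1_def Ew_def)
        show "connected_graph inc Cv E1" by (rule c1)
        show "connected_graph inc (Cw \<union> {v, w}) (Ew \<union> {e})" by (rule c2)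
        show "\<forall>f\<in>E1. inc f \<subseteq> Cv" by (auto simp: E1_def)
        show "\<forall>f\<in>Ew \<union> {e}. inc f \<subseteq> Cw \<union> {v, w}" using incw by (auto simp: Ew_def)
        show "E1 \<noteq> ET" using eE by (auto simp: E1_def)
        show "Ew \<union> {e} \<noteq> ET"
        proof
          assume "Ew \<union> {e} = ET"
          then have "e' \<in> Ew" using e'E ee by auto
          then show False using e'E1 notinc[OF e'E] by (auto simp: E1_def Ew_def)
        qed
        show "v \<in> Cv" "v \<in> Cw \<union> {v, w}" "v \<in> VH" using vCv vH by auto
      qed
    qed
  qed
  have Aeq: "A = leaves inc VT ET" using leavesA internal AVT AVH by auto
  have VTH: "VT \<inter> VH = leaves inc VT ET" using internal leavesA AVT AVH Aeq by (auto simp: leaves_def)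
  have disjE: "ET \<inter> EH = {}"
  proof (rule ccontr)
    assume "ET \<inter> EH \<noteq> {}"
    then obtain e where eT: "e \<in> ET" and eH: "e \<in> EH" by auto
    obtain u w where uw: "inc e = {u,w}" "u \<noteq> w" using edgesT eT by (metis card_2_iff)
    have uwH: "inc e \<subseteq> VH" using H eH by auto
    have uwT: "inc e \<subseteq> VT" using edgesT eT by auto
    have ul: "u \<in> leaves inc VT ET" and wl: "w \<in> leaves inc VT ET"
      using internal uwH uwT uw by auto
    obtain e0 where e0: "e0 \<in> ET" "u \<in> inc e0" "\<forall>f\<in>ET. u \<in> inc f \<longrightarrow> f = e0"
      "connected_graph inc (VT - {u}) (ET - {e0})" "\<forall>f\<in>ET-{e0}. inc f \<subseteq> VT - {u}"
      using leaf_remove[OF edgesT finT(2) tree ul] by blast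
    have e0e: "e0 = e" using e0(3) eT uw by auto
    have wuniq: "\<forall>f\<in>ET. w \<in> inc f \<longrightarrow> f = e"
    proof -
      have "card {f\<in>ET. w \<in> inc f} = 1" using wl by (simp add: leaves_def)
      moreover have "e \<in> {f\<in>ET. w \<in> inc f}" using eT uw by auto
      ultimately show ?thesis by (metis (no_types, lifting) card_1_singletonE mem_Collect_eq singletonD)
    qed
    have VTuw: "VT = {u,w}"
    proof -
      have "y = w" if "y \<in> VT - {u}" for y
      proof -
        have "w \<in> VT - {u}" using uwT uw by auto
        then have "(adj inc (ET - {e0}))\<^sup>*\<^sup>* w y" using e0(4) that unfolding connected_graph_def by auto
        moreover have "\<forall>f\<in>ET - {e0}. w \<notin> inc f" using wuniq e0e by auto
        ultimately show ?thesis using no_edge_reach by metis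
      qed
      then show ?thesis using uwT uw by blast
    qed
    have ETe: "ET = {e}"
    proof (rule ccontr)
      assume "ET \<noteq> {e}"
      then obtain f where f: "f \<in> ET" "f \<noteq> e" using eT by auto
      then have "inc f \<subseteq> {w}" using e0(5) e0e VTuw uw by auto
      then have "card (inc f) \<le> card {w}" by (intro card_mono) auto
      with edgesT f show False by auto
    qed
    have "sd inc l VH EH A \<le> ereal (glen l {e})"
    proof (rule sd_le[where V'="{u,w}"])
      show "subgraph inc {u, w} {e} VH EH" using uwH uw eH by (auto simp: subgraph_def)
      show "connected_graph inc {u, w} {e}"
        unfolding connected_graph_def
      proof (intro conjI ballI)
        fix a b assume "a \<in> {u,w}" "b \<in> {u,w}"
        moreover have "adj inc {e} u w" "adj inc {e} w u" using uw by (auto simp: adj_def insert_commute)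
        ultimately show "(adj inc {e})\<^sup>*\<^sup>* a b" by auto
      qed auto
      show "A \<subseteq> {u, w}" using AVT VTuw by simp
    qed
    then show False using lenlt ETe by simp
  qed
  have sct4: "sd inc l VH EH B \<le> sd inc l VT ET B" if B: "B \<subset> leaves inc VT ET" for B
  proof (rule ccontr)
    assume lt: "\<not> ?thesis"
    have BT: "B \<subseteq> VT" using B Aeq AVT by auto
    have "subgraph inc VT ET VT ET" using edgesT by (auto simp: subgraph_def)
    then obtain V' E' where S': "subgraph inc V' E' VT ET" "connected_graph inc V' E'" "B \<subseteq> V'"
      "sd inc l VT ET B = ereal (glen l E')"
      using sd_attained[OF finT _ connT BT] by blast
    show False
    proof (cases "V' = VT \<and> E' = ET")
      case False
      have "card B \<le> card A" using B Aeq finA by (intro card_mono) auto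
      then have "sd inc l VH EH B \<le> ereal (glen l E')"
        by (intro minimal[where V'=V']) (use False S' B Aeq AVH Ak in \<open>auto simp: subgraph_def\<close>)
      with lt S' show False by simp
    next
      case True
      obtain a where a: "a \<in> leaves inc VT ET" "a \<notin> B" using B by auto
      obtain e where e: "e \<in> ET" "connected_graph inc (VT - {a}) (ET - {e})"
        "\<forall>f\<in>ET-{e}. inc f \<subseteq> VT - {a}"
        using leaf_remove[OF edgesT finT(2) tree a(1)] by blast
      have "sd inc l VT ET B \<le> ereal (glen l (ET - {e}))"
        by (rule sd_le[where V'="VT - {a}"]) (use e BT a in \<open>auto simp: subgraph_def\<close>)
      moreover have "glen l (ET - {e}) < glen l ET"
        using e(1) posT finT(2) unfolding glen_def by (simp add: sum.remove[OF finT(2) e(1)])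
      ultimately show False using S' True by simp
    qed
  qed
  show ?thesis
  proof (intro exI conjI)
    show "subgraph inc VT ET VG EG" by (rule subT)
    show "is_tree inc VT ET" by (rule tree)
    show "card (leaves inc VT ET) \<le> k" using Aeq Ak by simp
    show "shortcut_tree inc l VT ET VH EH"
      unfolding shortcut_tree_def using tree VTH disjE lenlt Aeq sct4 by auto
  qed
qed

end
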